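(* Let $H$ be a monoid satisfying the ascending chain condition on principal ideals. Then the following hold: $1r\Rightarrow 0r$, $2r\Rightarrow 1r$, $2r\Leftrightarrow 3r$, $3r\Leftrightarrow 6r$, $6r\Leftrightarrow 5r$, $5r\Rightarrow 4r$, $5r\Rightarrow 5'r$, $4r\Rightarrow 4'r$, $1r\Rightarrow 1s$, $2r\Rightarrow 2s$, $5r\Rightarrow 5s$, $4r\Rightarrow 4s$, $2s\Rightarrow 5s$, $5's\Rightarrow 2s$.
   Context: A monoid means a commutative cancellative monoid (written multiplicatively); $H^{\ast}$ is its unit group, $\mathbb{N}=\{1,2,\dots\}$, $\mathbb{N}_0=\{0,1,2,\dots\}$. ACCP: every ascending chain of principal ideals of $H$ stabilizes. Elements are relatively prime ($a\perp b$) if all their common divisors are units. $\mathrm{Sqf}\,H$: elements not of the form $b^2c$ with $b\notin H^{\ast}$. $\mathrm{Gpr}\,H$: elements $r$ such that $r\mid b^n$ ($n\in\mathbb{N}$) implies $r\mid b$. Let $S$ stand for $\mathrm{Sqf}\,H$ (suffix s) or $\mathrm{Gpr}\,H$ (suffix r). For every $a\in H$: (0) there are $n\in\mathbb{N}$, $s_1,\dots,s_n\in S$ with $a=s_1\cdots s_n$; (1) there are $n\in\mathbb{N}$, $s_1,\dots,s_n\in S$ with $s_i\perp s_j$ for $i\ne j$ and $a=s_1s_2^2\cdots s_n^n$; (2) there are $n\in\mathbb{N}$, $s_1,\dots,s_n\in S$ with $s_i\mid s_{i+1}$ ($i<n$) and $a=s_1\cdots s_n$; (3) there are $n\in\mathbb{N}_0$,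 $s_0,\dots,s_n\in S$ with $a=s_0s_1^2s_2^{2^2}\cdots s_n^{2^n}$; (4) there are $b\in H$, $c\in S$ with $b\perp c$, $a=bc$, and some $d\in S$ with $d^2\mid b$ and $b\mid d^n$ for some $n\in\mathbb{N}$; (4') there are $b\in H$, $c\in S$ with $b\perp c$, $a=bc$, and for every $d\in S$, $d\mid b$ implies $d^2\mid b$; (5) there are $b\in H$, $c\in S$ with $a=bc$ and $a\mid c^n$ for some $n\in\mathbb{N}$; (5') there are $b\in H$, $c\in S$ with $a=bc$ and for every $d\in S$, $d\mid a$ implies $d\mid c$; (6) there are $b\in H$, $c\in S$ with $a=b^2c$. Condition $ks$ (resp. $kr$) is $(k)$ with $S=\mathrm{Sqf}\,H$ (resp. $S=\mathrm{Gpr}\,H$). *)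

theory Defs
  imports Main
begin

text \<open>A monoid H is modelled as a type of class comm_monoid_mult together with an
  explicit cancellativity hypothesis. Divisibility is the library dvd.\<close>

definition cancellative :: "'a::comm_monoid_mult itself \<Rightarrow> bool" where
  "cancellative _ \<longleftrightarrow> (\<forall>a b c::'a. a * b = a * c \<longrightarrow> b = c)"

definition unitH :: "'a::comm_monoid_mult \<Rightarrow> bool" where
  "unitH a \<longleftrightarrow> (\<exists>b. a * b = 1)"

text \<open>ACCP: every ascending chain f 0 H \<subseteq> f 1 H \<subseteq> ... of principal ideals stabilizes.\<close>
definition ACCP :: "'a::comm_monoid_mult itself \<Rightarrow> bool" where
  "ACCP _ \<longleftrightarrow> (\<forall>f::nat \<Rightarrow> 'a. (\<forall>n. f (Suc n) dvd f n) \<longrightarrow> (\<exists>N. \<forall>n\<ge>N. f N dvd f n))"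

definition relprime :: "'a::comm_monoid_mult \<Rightarrow> 'a \<Rightarrow> bool" where
  "relprime a b \<longleftrightarrow> (\<forall>d. d dvd a \<and> d dvd b \<longrightarrow> unitH d)"

definition Sqf :: "'a::comm_monoid_mult set" where
  "Sqf = {a. \<not> (\<exists>b c. a = b^2 * c \<and> \<not> unitH b)}"

definition Gpr :: "'a::comm_monoid_mult set" where
  "Gpr = {r. \<forall>b n. n \<ge> 1 \<longrightarrow> r dvd b ^ n \<longrightarrow> r dvd b}"

definition cond0 :: "'a::comm_monoid_mult set \<Rightarrow> 'a \<Rightarrow> bool" where
  "cond0 S a \<longleftrightarrow> (\<exists>n\<ge>1. \<exists>s::nat \<Rightarrow> 'a. (\<forall>i\<in>{1..n}. s i \<in> S) \<and> a = (\<Prod>i=1..n. s i))"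

definition cond1 :: "'a::comm_monoid_mult set \<Rightarrow> 'a \<Rightarrow> bool" where
  "cond1 S a \<longleftrightarrow> (\<exists>n\<ge>1. \<exists>s::nat \<Rightarrow> 'a. (\<forall>i\<in>{1..n}. s i \<in> S)
      \<and> (\<forall>i\<in>{1..n}. \<forall>j\<in>{1..n}. i \<noteq> j \<longrightarrow> relprime (s i) (s j))
      \<and> a = (\<Prod>i=1..n. s i ^ i))"

definition cond2 :: "'a::comm_monoid_mult set \<Rightarrow> 'a \<Rightarrow> bool" where
  "cond2 S a \<longleftrightarrow> (\<exists>n\<ge>1. \<exists>s::nat \<Rightarrow> 'a. (\<forall>i\<in>{1..n}. s i \<in> S)
      \<and> (\<forall>i. 1 \<le> i \<and> i < n \<longrightarrow> s i dvd s (Suc i))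
      \<and> a = (\<Prod>i=1..n. s i))"

definition cond3 :: "'a::comm_monoid_mult set \<Rightarrow> 'a \<Rightarrow> bool" where
  "cond3 S a \<longleftrightarrow> (\<exists>n::nat. \<exists>s::nat \<Rightarrow> 'a. (\<forall>i\<in>{0..n}. s i \<in> S)
      \<and> a = (\<Prod>i=0..n. s i ^ (2 ^ i)))"

definition cond4 :: "'a::comm_monoid_mult set \<Rightarrow> 'a \<Rightarrow> bool" where
  "cond4 S a \<longleftrightarrow> (\<exists>b c. c \<in> S \<and> relprime b c \<and> a = b * c
      \<and> (\<exists>d\<in>S. d^2 dvd b \<and> (\<exists>n\<ge>1. b dvd d ^ n)))"

definition cond4' :: "'a::comm_monoid_mult set \<Rightarrow> 'a \<Rightarrow> bool" where
  "cond4' S a \<longleftrightarrow> (\<exists>b c. c \<in> S \<and> relprime b c \<and> a = b * c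
      \<and> (\<forall>d\<in>S. d dvd b \<longrightarrow> d^2 dvd b))"

definition cond5 :: "'a::comm_monoid_mult set \<Rightarrow> 'a \<Rightarrow> bool" where
  "cond5 S a \<longleftrightarrow> (\<exists>b c. c \<in> S \<and> a = b * c \<and> (\<exists>n\<ge>1. a dvd c ^ n))"

definition cond5' :: "'a::comm_monoid_mult set \<Rightarrow> 'a \<Rightarrow> bool" where
  "cond5' S a \<longleftrightarrow> (\<exists>b c. c \<in> S \<and> a = b * c \<and> (\<forall>d\<in>S. d dvd a \<longrightarrow> d dvd c))"

definition cond6 :: "'a::comm_monoid_mult set \<Rightarrow> 'a \<Rightarrow> bool" where
  "cond6 S a \<longleftrightarrow> (\<exists>b c. c \<in> S \<and> a = b^2 * c)"

end

theory Submission
  imports Defs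
begin


lemma canc:
  assumes "cancellative TYPE('a::comm_monoid_mult)" and "(a::'a) * b = a * c"
  shows "b = c"
  using assms unfolding cancellative_def by blast

lemma unitH_iff: "unitH (a::'a::comm_monoid_mult) \<longleftrightarrow> a dvd 1"
  unfolding unitH_def dvd_def by (rule iffI; elim exE; rule exI; erule sym)

lemma dvd_unitH: "unitH (a::'a::comm_monoid_mult) \<Longrightarrow> x dvd a \<Longrightarrow> unitH x"
  unfolding unitH_iff by (rule dvd_trans)

lemma unitH_dvd: "unitH (a::'a::comm_monoid_mult) \<Longrightarrow> a dvd x"
  unfolding unitH_iff by (erule dvd_trans) simp

lemma unitH_mult: "unitH (a::'a::comm_monoid_mult) \<Longrightarrow> unitH b \<Longrightarrow> unitH (a*b)"
proof -
  assume "unitH a" "unitH b"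
  then obtain a' b' where "a * a' = 1" "b * b' = 1" unfolding unitH_def by blast
  moreover have "(a * b) * (a' * b') = (a * a') * (b * b')" by (simp add: ac_simps)
  ultimately have "(a * b) * (a' * b') = 1" by simp
  thus ?thesis unfolding unitH_def by blast
qed

lemma unitH_multD: "unitH ((a::'a::comm_monoid_mult) * b) \<Longrightarrow> unitH a"
  using dvd_unitH[of "a * b" a] by simp

lemma dvd_cancel_right:
  assumes "cancellative TYPE('a::comm_monoid_mult)" and "(x::'a) * q dvd b * q"
  shows "x dvd b"
proof -
  from assms(2) obtain k where "b * q = x * q * k" by (auto simp: dvd_def)
  hence "q * b = q * (x * k)" by (simp add: ac_simps)
  hence "b = x * k" by (rule canc[OF assms(1)])
  thus ?thesis by simp
qed

lemma proper_div:
  assumes "cancellative TYPE('a::comm_monoid_mult)" and "(a::'a) = b * c" and "\<not> unitH c"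
  shows "\<not> a dvd b"
proof
  assume "a dvd b"
  then obtain k where "b = a * k" by (auto simp: dvd_def)
  hence "b * 1 = b * (c * k)" using assms(2) by (simp add: ac_simps)
  hence "1 = c * k" by (rule canc[OF assms(1)])
  hence "unitH c" unfolding unitH_def by metis
  thus False using assms(3) by blast
qed

lemma GprD: "(r::'a::comm_monoid_mult) \<in> Gpr \<Longrightarrow> n \<ge> 1 \<Longrightarrow> r dvd b ^ n \<Longrightarrow> r dvd b"
  unfolding Gpr_def by blast

lemma one_Gpr: "(1::'a::comm_monoid_mult) \<in> Gpr"
  unfolding Gpr_def by simp

lemma Gpr_dvd:
  assumes "cancellative TYPE('a::comm_monoid_mult)" and "(r::'a) \<in> Gpr" and "x dvd r"
  shows "x \<in> Gpr"
proof (unfold Gpr_def, intro CollectI allI impI)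
  fix b :: 'a and n :: nat
  assume n: "n \<ge> 1" and xb: "x dvd b ^ n"
  from assms(3) obtain q where rq: "r = x * q" by (auto simp: dvd_def)
  have "q dvd q ^ n" using n by (cases n) auto
  hence "x * q dvd b ^ n * q ^ n" using xb mult_dvd_mono by blast
  hence "r dvd (b * q) ^ n" using rq by (simp add: power_mult_distrib)
  hence "r dvd b * q" using GprD[OF assms(2) n] by blast
  hence "x * q dvd b * q" using rq by simp
  thus "x dvd b" using dvd_cancel_right[OF assms(1)] by blast
qed

lemma unit_Gpr:
  assumes "cancellative TYPE('a::comm_monoid_mult)" and "unitH (u::'a)"
  shows "u \<in> Gpr"
  using Gpr_dvd[OF assms(1) one_Gpr] assms(2) unitH_iff by blast

lemma Gpr_relprime:
  assumes "cancellative TYPE('a::comm_monoid_mult)" and "(x::'a) * y \<in> Gpr"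
  shows "relprime x y"
  unfolding relprime_def
proof (intro allI impI)
  fix d assume "d dvd x \<and> d dvd y"
  then obtain x' y' where x: "x = d * x'" and y: "y = d * y'" by (auto simp: dvd_def)
  have "(d * x' * y') ^ 2 = x * y * (x' * y')"
    by (simp add: x y power2_eq_square ac_simps)
  hence "x * y dvd (d * x' * y') ^ 2" by simp
  hence "x * y dvd d * x' * y'" using GprD[OF assms(2), of 2] by simp
  then obtain k where k: "d * x' * y' = x * y * k" by (auto simp: dvd_def)
  have "x * y * k = (d * x' * y') * (d * k)" by (simp add: x y ac_simps)
  hence "(d * x' * y') * 1 = (d * x' * y') * (d * k)" using k by simp
  hence "1 = d * k" by (rule canc[OF assms(1)])
  thus "unitH d" unfolding unitH_def by metis
qed

lemma Gpr_Sqf: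
  assumes "cancellative TYPE('a::comm_monoid_mult)"
  shows "(Gpr::'a set) \<subseteq> Sqf"
proof
  fix r :: 'a assume r: "r \<in> Gpr"
  show "r \<in> Sqf" unfolding Sqf_def
  proof (clarsimp)
    fix b c assume rb: "r = b^2 * c" and nu: "\<not> unitH b"
    have "(b * c) ^ 2 = r * c" using rb by (simp add: power2_eq_square ac_simps)
    hence "r dvd (b * c) ^ 2" by simp
    hence "r dvd b * c" using GprD[OF r, of 2] by simp
    then obtain k where k: "b * c = r * k" by (auto simp: dvd_def)
    have "r * k = (b * c) * (b * k)" using rb by (simp add: power2_eq_square ac_simps)
    hence "(b * c) * 1 = (b * c) * (b * k)" using k by simp
    hence "1 = b * k" by (rule canc[OF assms])
    thus False using nu unfolding unitH_def by metis
  qed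
qed

lemma unit_Sqf:
  assumes "unitH (u::'a::comm_monoid_mult)"
  shows "u \<in> Sqf"
  unfolding Sqf_def
proof (clarsimp)
  fix b c assume "u = b^2 * c" "\<not> unitH b"
  hence "b dvd u" by (simp add: power2_eq_square)
  thus False using dvd_unitH assms \<open>\<not> unitH b\<close> by blast
qed

lemma accp_wf:
  assumes "ACCP TYPE('a::comm_monoid_mult)"
  shows "wf {(x::'a, y). x dvd y \<and> \<not> y dvd x}"
proof (subst wf_iff_no_infinite_down_chain, rule notI)
  assume "\<exists>f. \<forall>i. (f (Suc i), f i) \<in> {(x::'a, y). x dvd y \<and> \<not> y dvd x}"
  then obtain f :: "nat \<Rightarrow> 'a" where f: "\<And>i. f (Suc i) dvd f i \<and> \<not> f i dvd f (Suc i)" by auto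
  then obtain N where "\<forall>n\<ge>N. f N dvd f n" using assms unfolding ACCP_def by blast
  hence "f N dvd f (Suc N)" by simp
  thus False using f by blast
qed

lemma accp_induct:
  assumes "ACCP TYPE('a::comm_monoid_mult)"
    and "\<And>a::'a. (\<And>b. b dvd a \<Longrightarrow> \<not> a dvd b \<Longrightarrow> P b) \<Longrightarrow> P a"
  shows "P a"
  using accp_wf[OF assms(1)]
proof (induction a rule: wf_induct_rule)
  case (less x)
  then show ?case using assms(2) by blast
qed



lemma chain_dvd:
  fixes s :: "nat \<Rightarrow> 'a::comm_monoid_mult"
  assumes "\<forall>i. 1 \<le> i \<and> i < n \<longrightarrow> s i dvd s (Suc i)" and "1 \<le> i" and "i \<le> n"
  shows "s i dvd s n"
  using assms
proof (induction n)
  case 0 then show ?case by simp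
next
  case (Suc n)
  show ?case
  proof (cases "i = Suc n")
    case True then show ?thesis by simp
  next
    case False
    hence "i \<le> n" using Suc.prems by simp
    hence "s i dvd s n" using Suc by simp
    moreover have "s n dvd s (Suc n)" using Suc.prems \<open>i \<le> n\<close> by simp
    ultimately show ?thesis using dvd_trans by blast
  qed
qed

lemma cond2_cond5: "cond2 S (a::'a::comm_monoid_mult) \<Longrightarrow> cond5 S a"
proof -
  assume "cond2 S a"
  then obtain n s where n: "n \<ge> 1" and sS: "\<forall>i\<in>{1..n}. s i \<in> S"
    and ch: "\<forall>i. 1 \<le> i \<and> i < n \<longrightarrow> s i dvd s (Suc i)" and a: "a = (\<Prod>i=1..n. s i)"
    unfolding cond2_def by blast
  then obtain m where m: "n = Suc m" by (cases n) auto
  have a2: "a = (\<Prod>i=1..m. s i) * s n" using a m by (simp add: prod.cl_ivl_Suc)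
  have "(\<Prod>i=1..n. s i) dvd (\<Prod>i=1..n. s n)"
    by (rule prod_dvd_prod) (use chain_dvd[OF ch] in auto)
  hence "a dvd s n ^ n" using a by simp
  moreover have "s n \<in> S" using sS n by simp
  moreover have "n \<ge> 1" using n .
  ultimately have "s n \<in> S \<and> a = (\<Prod>i=1..m. s i) * s n \<and> (\<exists>k\<ge>1. a dvd s n ^ k)" using a2 by blast
  thus ?thesis unfolding cond5_def by blast
qed

lemma chain_sq:
  fixes s :: "nat \<Rightarrow> 'a::comm_monoid_mult"
  shows "(\<forall>i. 1 \<le> i \<and> i < n \<longrightarrow> s i dvd s (Suc i)) \<Longrightarrow>
     \<exists>b c. (\<Prod>i=1..n. s i) = b^2 * c \<and> (1 \<le> n \<longrightarrow> c dvd s n)"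
proof (induction n rule: less_induct)
  case (less n)
  show ?case
  proof (cases n)
    case 0 then show ?thesis by (intro exI[of _ 1]) simp
  next
    case (Suc k) show ?thesis
    proof (cases k)
      case 0 then show ?thesis using Suc by (intro exI[of _ 1] exI[of _ "s 1"]) simp
    next
      case (Suc m)
      hence n: "n = Suc (Suc m)" using \<open>n = Suc k\<close> by simp
      have "\<forall>i. 1 \<le> i \<and> i < m \<longrightarrow> s i dvd s (Suc i)" using less.prems n by auto
      then obtain b c where bc: "(\<Prod>i=1..m. s i) = b^2 * c" and cm: "1 \<le> m \<longrightarrow> c dvd s m"
        using less.IH[of m] n by auto
      have "s (Suc m) dvd s (Suc (Suc m))" using less.prems n by auto
      then obtain q where q: "s (Suc (Suc m)) = s (Suc m) * q" by (auto simp: dvd_def)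
      have cd: "c dvd s (Suc m)"
      proof (cases m)
        case 0
        hence "1 = c * b^2" using bc by (simp add: ac_simps)
        hence "c dvd 1" by (metis dvdI)
        thus ?thesis using dvd_trans one_dvd by blast
      next
        case (Suc m')
        hence "c dvd s m" using cm by simp
        moreover have "s m dvd s (Suc m)" using less.prems n Suc by auto
        ultimately show ?thesis using dvd_trans by blast
      qed
      have pr: "(\<Prod>i=1..n. s i) = (\<Prod>i=1..m. s i) * s (Suc m) * s (Suc (Suc m))"
        using n by (simp add: prod.cl_ivl_Suc)
      have eq: "(\<Prod>i=1..n. s i) = (b * s (Suc m))^2 * (c * q)"
        unfolding pr bc q by (simp add: power2_eq_square ac_simps)
      have "c * q dvd s n" using n q cd by (simp add: mult_dvd_mono)
      thus ?thesis using eq by blast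
    qed
  qed
qed

lemma cond2_cond6:
  assumes "cancellative TYPE('a::comm_monoid_mult)" and "cond2 Gpr (a::'a)"
  shows "cond6 Gpr a"
proof -
  obtain n s where n: "n \<ge> 1" and sS: "\<forall>i\<in>{1..n}. s i \<in> Gpr"
    and ch: "\<forall>i. 1 \<le> i \<and> i < n \<longrightarrow> s i dvd s (Suc i)" and a: "a = (\<Prod>i=1..n. s i)"
    using assms(2) unfolding cond2_def by blast
  obtain b c where bc: "(\<Prod>i=1..n. s i) = b^2 * c" and "c dvd s n"
    using chain_sq[OF ch] n by blast
  moreover have "s n \<in> Gpr" using sS n by auto
  ultimately have "c \<in> Gpr" using Gpr_dvd[OF assms(1)] by blast
  thus ?thesis unfolding cond6_def using a bc by blast
qed

lemma prod_pow:
  fixes f :: "'b \<Rightarrow> 'a::comm_monoid_mult"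
  shows "prod f A ^ n = prod (\<lambda>x. f x ^ n) A"
  by (induct A rule: infinite_finite_induct) (auto simp add: power_mult_distrib)

lemma prod_pow2_shift:
  fixes t :: "nat \<Rightarrow> 'a::comm_monoid_mult"
  shows "(\<Prod>i=0..n. t i ^ (2 ^ Suc i)) = (\<Prod>i=0..n. t i ^ (2 ^ i))^2"
  unfolding prod_pow by (intro prod.cong refl) (simp only: power_Suc2 power_mult)

lemma cond3_cond6: "cond3 S (a::'a::comm_monoid_mult) \<Longrightarrow> cond6 S a"
proof -
  assume "cond3 S a"
  then obtain n s where sS: "\<forall>i\<in>{0..n}. s i \<in> S" and a: "a = (\<Prod>i=0..n. s i ^ (2 ^ i))"
    unfolding cond3_def by blast
  show ?thesis
  proof (cases n)
    case 0
    hence "a = 1^2 * s 0" using a by simp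
    thus ?thesis unfolding cond6_def using sS by (intro exI[of _ 1] exI[of _ "s 0"]) auto
  next
    case (Suc m)
    have "(\<Prod>i=0..Suc m. s i ^ (2 ^ i)) = s 0 ^ (2 ^ 0) * prod ((\<lambda>i. s i ^ (2 ^ i)) \<circ> Suc) {0..m}"
      by (rule prod.atLeast0_atMost_Suc_shift)
    also have "\<dots> = s 0 * (\<Prod>i=0..m. s (Suc i) ^ (2 ^ Suc i))"
      by (simp only: comp_def power_0 power_one_right)
    finally have "a = s 0 * (\<Prod>i=0..m. s (Suc i) ^ (2 ^ Suc i))"
      using a Suc by simp
    hence "a = (\<Prod>i=0..m. s (Suc i) ^ (2 ^ i))^2 * s 0"
      using prod_pow2_shift[of "\<lambda>i. s (Suc i)" m] by (simp add: ac_simps)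
    moreover have "s 0 \<in> S" using sS by auto
    ultimately show ?thesis unfolding cond6_def by blast
  qed
qed

lemma unit_sq_dvd:
  assumes "unitH (b::'a::comm_monoid_mult)" shows "b^2 * c dvd c"
proof -
  obtain v where "b * v = 1" using assms unfolding unitH_def by blast
  moreover have "b^2 * c * v^2 = c * (b * v)^2" by (simp add: power2_eq_square ac_simps)
  ultimately have "c = b^2 * c * v^2" by simp
  thus ?thesis by (metis dvdI)
qed

lemma cond6_cond3:
  assumes canc: "cancellative TYPE('a::comm_monoid_mult)" and acc: "ACCP TYPE('a)"
    and h6: "\<forall>a::'a. cond6 Gpr a"
  shows "cond3 Gpr (a::'a)"
proof (rule accp_induct[OF acc, of "\<lambda>x. cond3 Gpr x" a])
  fix a :: 'a
  assume IH: "\<And>b. b dvd a \<Longrightarrow> \<not> a dvd b \<Longrightarrow> cond3 Gpr b"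
  obtain b c where cG: "c \<in> Gpr" and a: "a = b^2 * c" using h6 unfolding cond6_def by blast
  show "cond3 Gpr a"
  proof (cases "unitH b")
    case True
    hence "a dvd c" using a unit_sq_dvd by blast
    hence "a \<in> Gpr" using Gpr_dvd[OF canc cG] by blast
    thus ?thesis unfolding cond3_def by (intro exI[of _ 0] exI[of _ "\<lambda>_. a"]) simp
  next
    case False
    have a2: "a = b * (b * c)" using a by (simp add: power2_eq_square ac_simps)
    have "\<not> unitH (b * c)" using False unitH_multD by blast
    hence "\<not> a dvd b" using proper_div[OF canc a2] by blast
    moreover have "b dvd a" using a2 by simp
    ultimately have "cond3 Gpr b" using IH by blast
    then obtain n t where tS: "\<forall>i\<in>{0..n}. t i \<in> Gpr" and b: "b = (\<Prod>i=0..n. t i ^ (2 ^ i))"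
      unfolding cond3_def by blast
    define s where "s = (\<lambda>i. if i = 0 then c else t (i - 1))"
    have "(\<Prod>i=0..Suc n. s i ^ (2 ^ i)) = s 0 ^ (2 ^ 0) * prod ((\<lambda>i. s i ^ (2 ^ i)) \<circ> Suc) {0..n}"
      by (rule prod.atLeast0_atMost_Suc_shift)
    also have "\<dots> = c * (\<Prod>i=0..n. t i ^ (2 ^ Suc i))" by (simp only: comp_def s_def) simp
    also have "\<dots> = a" using prod_pow2_shift[of t n] b a by (simp add: ac_simps)
    finally have "a = (\<Prod>i=0..Suc n. s i ^ (2 ^ i))" by simp
    moreover have "\<forall>i\<in>{0..Suc n}. s i \<in> Gpr" using tS cG by (auto simp: s_def)
    ultimately show ?thesis unfolding cond3_def by blast
  qed
qed

lemma cond6_cond5: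
  assumes canc: "cancellative TYPE('a::comm_monoid_mult)" and acc: "ACCP TYPE('a)"
    and h6: "\<forall>a::'a. cond6 Gpr a"
  shows "cond5 Gpr (a::'a)"
proof (rule accp_induct[OF acc, of "\<lambda>x. cond5 Gpr x" a])
  fix a :: 'a
  assume IH: "\<And>b. b dvd a \<Longrightarrow> \<not> a dvd b \<Longrightarrow> cond5 Gpr b"
  obtain b c where cG: "c \<in> Gpr" and a: "a = b^2 * c" using h6 unfolding cond6_def by blast
  show "cond5 Gpr a"
  proof (cases "unitH b")
    case True
    hence "a dvd c ^ 1" using a unit_sq_dvd by simp
    thus ?thesis unfolding cond5_def using a cG by (rule_tac exI[of _ "b^2"], rule_tac exI[of _ c]) auto
  next
    case False
    have a2: "a = (b * c) * b" using a by (simp add: power2_eq_square ac_simps)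
    hence "\<not> a dvd (b * c)" using proper_div[OF canc a2 False] by blast
    moreover have "b * c dvd a" using a2 by simp
    ultimately have "cond5 Gpr (b * c)" using IH by blast
    then obtain B C m where CG: "C \<in> Gpr" and bc: "b * c = B * C" and m: "m \<ge> 1"
      and dv: "b * c dvd C ^ m" unfolding cond5_def by blast
    have "b dvd C ^ m" using dv dvd_trans by (metis dvd_triv_left)
    hence "a dvd C ^ m * C ^ m" using a2 dv by (simp add: mult_dvd_mono)
    hence "a dvd C ^ (2 * m)" by (simp add: power_add[symmetric] mult_2)
    moreover have "a = (b * B) * C" using a2 bc by (simp add: ac_simps)
    moreover have "2 * m \<ge> 1" using m by simp
    ultimately have "C \<in> Gpr \<and> a = (b * B) * C \<and> (\<exists>n\<ge>1. a dvd C ^ n)" using CG by blast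
    thus ?thesis unfolding cond5_def by blast
  qed
qed



lemma pow_le_dvd:
  fixes a :: "'a::comm_monoid_mult"
  assumes "m \<le> n" shows "a ^ m dvd a ^ n"
proof -
  have "a ^ n = a ^ m * a ^ (n - m)" using assms by (simp add: power_add[symmetric])
  thus ?thesis by (rule dvdI)
qed

lemma prod_shift1:
  fixes g :: "nat \<Rightarrow> 'a::comm_monoid_mult"
  shows "prod g {1..Suc m} = g 1 * prod (\<lambda>i. g (Suc i)) {1..m}"
proof -
  have "prod g {1..Suc m} = g 1 * prod g {Suc 1..Suc m}"
    by (rule prod.atLeast_Suc_atMost) simp
  also have "prod g {Suc 1..Suc m} = prod (\<lambda>i. g (Suc i)) {1..m}"
    by (rule prod.shift_bounds_cl_Suc_ivl)
  finally show ?thesis .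
qed

definition cond1p :: "'a::comm_monoid_mult \<Rightarrow> bool" where
  "cond1p a \<longleftrightarrow> (\<exists>n\<ge>1. \<exists>s::nat \<Rightarrow> 'a. a = (\<Prod>i=1..n. s i ^ i) \<and> (\<Prod>i=1..n. s i) \<in> Gpr)"

lemma unitH_power: "unitH (c::'a::comm_monoid_mult) \<Longrightarrow> unitH (c ^ k)"
proof (induct k)
  case 0 show ?case unfolding unitH_def by (rule exI[of _ 1]) simp
next
  case (Suc k) thus ?case using unitH_mult[of c "c ^ k"] by simp
qed

lemma cond5_cond1p:
  assumes canc: "cancellative TYPE('a::comm_monoid_mult)" and acc: "ACCP TYPE('a)"
    and h5: "\<forall>a::'a. cond5 Gpr a"
  shows "cond1p (a::'a)"
proof (rule accp_induct[OF acc, of "\<lambda>x. cond1p x" a])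
  fix a :: 'a
  assume IH: "\<And>b. b dvd a \<Longrightarrow> \<not> a dvd b \<Longrightarrow> cond1p b"
  obtain b c k where cG: "c \<in> Gpr" and a: "a = b * c" and k: "k \<ge> 1" and ak: "a dvd c ^ k"
    using h5 unfolding cond5_def by blast
  show "cond1p a"
  proof (cases "unitH c")
    case True
    have "unitH a" using dvd_unitH[OF unitH_power[OF True] ak] .
    hence "a \<in> Gpr" using unit_Gpr[OF canc] by blast
    thus ?thesis unfolding cond1p_def by (intro exI[of _ 1] conjI exI[of _ "\<lambda>_. a"]) simp_all
  next
    case False
    have "\<not> a dvd b" using proper_div[OF canc a False] .
    moreover have "b dvd a" using a by simp
    ultimately have "cond1p b" using IH by blast
    then obtain m t where m: "m \<ge> 1" and b: "b = (\<Prod>i=1..m. t i ^ i)"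
      and rG: "(\<Prod>i=1..m. t i) \<in> Gpr" unfolding cond1p_def by blast
    define r where "r = (\<Prod>i=1..m. t i)"
    have rb: "r dvd b" unfolding r_def b
    proof (rule prod_dvd_prod)
      fix i assume i: "i \<in> {1..m}"
      have "t i ^ 1 dvd t i ^ i" by (rule pow_le_dvd) (use i in simp)
      thus "t i dvd t i ^ i" by simp
    qed
    obtain k' where k': "k = Suc k'" using k by (cases k) auto
    have "b * c dvd c ^ k' * c" using ak a k' by (simp add: ac_simps)
    hence bk: "b dvd c ^ k'" using dvd_cancel_right[OF canc] by blast
    have "r dvd c"
    proof (cases k')
      case 0
      hence "b dvd 1" using bk by simp
      hence "r dvd 1" using rb dvd_trans by blast
      thus ?thesis using dvd_trans one_dvd by blast
    next
      case (Suc k'')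
      hence "r dvd c ^ k'" using rb bk dvd_trans by blast
      thus ?thesis using GprD[of r k' c] rG Suc r_def by simp
    qed
    then obtain u where u: "c = r * u" by (auto simp: dvd_def)
    define s where "s = (\<lambda>i. if i = 1 then u else t (i - 1))"
    have "(\<Prod>i=1..Suc m. s i ^ i) = s 1 ^ 1 * (\<Prod>i=1..m. s (Suc i) ^ Suc i)"
      using prod_shift1[of "\<lambda>i. s i ^ i" m] by simp
    also have "\<dots> = u * (\<Prod>i=1..m. t i * t i ^ i)"
      by (simp add: s_def)
    also have "\<dots> = u * r * b" unfolding r_def b prod.distrib by (simp add: ac_simps)
    also have "\<dots> = a" using a u by (simp add: ac_simps)
    finally have e1: "a = (\<Prod>i=1..Suc m. s i ^ i)" by simp
    have "(\<Prod>i=1..Suc m. s i) = s 1 * (\<Prod>i=1..m. s (Suc i))"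
      using prod_shift1[of s m] by simp
    also have "\<dots> = c" using u by (simp add: s_def r_def ac_simps)
    finally have "(\<Prod>i=1..Suc m. s i) \<in> Gpr" using cG by simp
    thus ?thesis unfolding cond1p_def using e1 by (intro exI[of _ "Suc m"]) auto
  qed
qed

lemma cond1p_cond1:
  assumes canc: "cancellative TYPE('a::comm_monoid_mult)" and "cond1p (a::'a)"
  shows "cond1 Gpr a"
proof -
  obtain n s where n: "n \<ge> 1" and a: "a = (\<Prod>i=1..n. s i ^ i)"
    and G: "(\<Prod>i=1..n. s i) \<in> Gpr" using assms(2) unfolding cond1p_def by blast
  have sG: "\<forall>i\<in>{1..n}. s i \<in> Gpr"
  proof
    fix i assume i: "i \<in> {1..n}"
    have "prod s {i} dvd prod s {1..n}" by (rule prod_dvd_prod_subset) (use i in auto)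
    thus "s i \<in> Gpr" using Gpr_dvd[OF canc G] by simp
  qed
  have "\<forall>i\<in>{1..n}. \<forall>j\<in>{1..n}. i \<noteq> j \<longrightarrow> relprime (s i) (s j)"
  proof (intro ballI impI)
    fix i j assume ij: "i \<in> {1..n}" "j \<in> {1..n}" "i \<noteq> j"
    have "prod s {i, j} dvd (\<Prod>i=1..n. s i)"
      by (rule prod_dvd_prod_subset) (use ij in auto)
    hence "s i * s j \<in> Gpr" using Gpr_dvd[OF canc G] ij by simp
    thus "relprime (s i) (s j)" using Gpr_relprime[OF canc] by blast
  qed
  thus ?thesis unfolding cond1_def using n a sG by blast
qed

lemma cond1p_cond4:
  assumes canc: "cancellative TYPE('a::comm_monoid_mult)" and "cond1p (a::'a)"
  shows "cond4 Gpr a"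
proof -
  obtain n s where n: "n \<ge> 1" and a: "a = (\<Prod>i=1..n. s i ^ i)"
    and G: "(\<Prod>i=1..n. s i) \<in> Gpr" using assms(2) unfolding cond1p_def by blast
  define b where "b = (\<Prod>i=Suc 1..n. s i ^ i)"
  define d where "d = (\<Prod>i=Suc 1..n. s i)"
  have a2: "a = s 1 * b" unfolding a b_def using n by (simp add: prod.atLeast_Suc_atMost)
  have G2: "s 1 * d \<in> Gpr" using G n unfolding d_def by (simp add: prod.atLeast_Suc_atMost)
  have dG: "d \<in> Gpr" using Gpr_dvd[OF canc G2] by simp
  have cG: "s 1 \<in> Gpr" using Gpr_dvd[OF canc G2] by simp
  have "d^2 = (\<Prod>i=Suc 1..n. s i ^ 2)" unfolding d_def prod_pow ..
  also have "\<dots> dvd b" unfolding b_def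
  proof (rule prod_dvd_prod)
    fix i assume "i \<in> {Suc 1..n}"
    thus "s i ^ 2 dvd s i ^ i" using pow_le_dvd[of 2 i "s i"] by simp
  qed
  finally have d2: "d^2 dvd b" .
  have "b dvd (\<Prod>i=Suc 1..n. s i ^ n)" unfolding b_def by (rule prod_dvd_prod) (rule pow_le_dvd; simp)
  also have "\<dots> = d ^ n" unfolding d_def prod_pow ..
  finally have bd: "b dvd d ^ n" .
  have rp: "relprime d (s 1)" using Gpr_relprime[OF canc] G2 by (simp add: ac_simps)
  have "relprime b (s 1)"
    unfolding relprime_def
  proof (intro allI impI)
    fix e assume e: "e dvd b \<and> e dvd s 1"
    hence eG: "e \<in> Gpr" using Gpr_dvd[OF canc cG] by blast
    have "e dvd d ^ n" using e bd dvd_trans by blast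
    hence "e dvd d" using GprD[OF eG n] by blast
    thus "unitH e" using rp e unfolding relprime_def by blast
  qed
  moreover have "a = b * s 1" using a2 by (simp add: ac_simps)
  ultimately have "s 1 \<in> Gpr \<and> relprime b (s 1) \<and> a = b * s 1
      \<and> (\<exists>d\<in>Gpr. d^2 dvd b \<and> (\<exists>n\<ge>1. b dvd d ^ n))" using cG dG d2 bd n by blast
  thus ?thesis unfolding cond4_def by blast
qed



lemma dvd_prod_mem:
  fixes s :: "nat \<Rightarrow> 'a::comm_monoid_mult"
  assumes "i \<in> {1..n}" shows "s i dvd (\<Prod>i=1..n. s i)"
proof -
  have "prod s {i} dvd prod s {1..n}" by (rule prod_dvd_prod_subset) (use assms in auto)
  thus ?thesis by simp
qed

lemma chain_gen:
  assumes canc: "cancellative TYPE('a::comm_monoid_mult)" and acc: "ACCP TYPE('a)"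
    and H: "\<And>a::'a. \<exists>b c. c \<in> S \<and> a = b * c \<and> (unitH c \<longrightarrow> a \<in> S) \<and> (\<forall>d\<in>S. d dvd b \<longrightarrow> d dvd c)"
  shows "cond2 S (a::'a)"
proof (rule accp_induct[OF acc, of "\<lambda>x. cond2 S x" a])
  fix a :: 'a
  assume IH: "\<And>b. b dvd a \<Longrightarrow> \<not> a dvd b \<Longrightarrow> cond2 S b"
  from H[of a] obtain b c where all: "c \<in> S \<and> a = b * c \<and> (unitH c \<longrightarrow> a \<in> S) \<and> (\<forall>d\<in>S. d dvd b \<longrightarrow> d dvd c)"
    by (elim exE)
  note cS = conjunct1[OF all]
  note a = conjunct1[OF conjunct2[OF all]]
  note u = conjunct1[OF conjunct2[OF conjunct2[OF all]]]
  note bc = conjunct2[OF conjunct2[OF conjunct2[OF all]]]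
  show "cond2 S a"
  proof (cases "unitH c")
    case True
    hence "a \<in> S" using u by blast
    thus ?thesis unfolding cond2_def by (intro exI[of _ 1] conjI exI[of _ "\<lambda>_. a"]) simp_all
  next
    case False
    have "\<not> a dvd b" using proper_div[OF canc a False] .
    moreover have "b dvd a" using a by simp
    ultimately have "cond2 S b" using IH by blast
    then obtain n s where n: "n \<ge> 1" and sS: "\<forall>i\<in>{1..n}. s i \<in> S"
      and ch: "\<forall>i. 1 \<le> i \<and> i < n \<longrightarrow> s i dvd s (Suc i)" and b: "b = (\<Prod>i=1..n. s i)"
      unfolding cond2_def by blast
    define s' where "s' = s(Suc n := c)"
    have "(\<Prod>i=1..Suc n. s' i) = (\<Prod>i=1..n. s' i) * c" by (simp add: s'_def)
    also have "(\<Prod>i=1..n. s' i) = b" unfolding b by (rule prod.cong) (auto simp: s'_def)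
    finally have e: "a = (\<Prod>i=1..Suc n. s' i)" using a by simp
    have snc: "s n dvd c"
    proof -
      have "s n dvd b" unfolding b by (rule dvd_prod_mem) (use n in simp)
      moreover have "s n \<in> S" using sS n by simp
      ultimately show ?thesis using bc by blast
    qed
    have ch': "\<forall>i. 1 \<le> i \<and> i < Suc n \<longrightarrow> s' i dvd s' (Suc i)"
    proof (intro allI impI)
      fix i assume i: "1 \<le> i \<and> i < Suc n"
      show "s' i dvd s' (Suc i)"
      proof (cases "i = n")
        case True thus ?thesis using snc by (simp add: s'_def)
      next
        case False thus ?thesis using i ch by (simp add: s'_def)
      qed
    qed
    have "\<forall>i\<in>{1..Suc n}. s' i \<in> S" using sS cS by (auto simp: s'_def)
    moreover have "Suc n \<ge> 1" by simp
    ultimately show ?thesis unfolding cond2_def using e ch' by blast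
  qed
qed

lemma cond5_H:
  assumes canc: "cancellative TYPE('a::comm_monoid_mult)" and "cond5 Gpr (a::'a)"
  shows "\<exists>b c. c \<in> Gpr \<and> a = b * c \<and> (unitH c \<longrightarrow> a \<in> Gpr) \<and> (\<forall>d\<in>Gpr. d dvd b \<longrightarrow> d dvd c)"
proof -
  obtain b c k where cG: "c \<in> Gpr" and a: "a = b * c" and k: "k \<ge> 1" and ak: "a dvd c ^ k"
    using assms(2) unfolding cond5_def by blast
  have "unitH c \<longrightarrow> a \<in> Gpr"
    using dvd_unitH[OF unitH_power ak] unit_Gpr[OF canc] by blast
  moreover have "\<forall>d\<in>Gpr. d dvd b \<longrightarrow> d dvd c"
  proof (intro ballI impI)
    fix d assume dG: "d \<in> Gpr" and db: "d dvd b"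
    obtain k' where k': "k = Suc k'" using k by (cases k) auto
    have "b * c dvd c ^ k' * c" using ak a k' by (simp add: ac_simps)
    hence bk: "b dvd c ^ k'" using dvd_cancel_right[OF canc] by blast
    show "d dvd c"
    proof (cases k')
      case 0
      hence "b dvd 1" using bk by simp
      hence "d dvd 1" using db dvd_trans by blast
      thus ?thesis using dvd_trans one_dvd by blast
    next
      case (Suc k'')
      hence "d dvd c ^ k'" using db bk dvd_trans by blast
      thus ?thesis using GprD[of d k' c] dG Suc by simp
    qed
  qed
  ultimately show ?thesis using cG a by blast
qed

lemma cond5_cond2:
  assumes canc: "cancellative TYPE('a::comm_monoid_mult)" and acc: "ACCP TYPE('a)"
    and h5: "\<forall>a::'a. cond5 Gpr a"
  shows "cond2 Gpr (a::'a)"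
  by (rule chain_gen[OF canc acc], rule cond5_H[OF canc], rule spec[OF h5])

lemma sqf_div:
  assumes canc: "cancellative TYPE('a::comm_monoid_mult)" and acc: "ACCP TYPE('a)"
  shows "\<not> unitH (a::'a) \<longrightarrow> (\<exists>d\<in>Sqf. d dvd a \<and> \<not> unitH d)"
proof (rule accp_induct[OF acc, of "\<lambda>x. \<not> unitH x \<longrightarrow> (\<exists>d\<in>Sqf. d dvd x \<and> \<not> unitH d)" a])
  fix a :: 'a
  assume IH: "\<And>b. b dvd a \<Longrightarrow> \<not> a dvd b \<Longrightarrow> \<not> unitH b \<longrightarrow> (\<exists>d\<in>Sqf. d dvd b \<and> \<not> unitH d)"
  show "\<not> unitH a \<longrightarrow> (\<exists>d\<in>Sqf. d dvd a \<and> \<not> unitH d)"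
  proof
    assume na: "\<not> unitH a"
    show "\<exists>d\<in>Sqf. d dvd a \<and> \<not> unitH d"
    proof (cases "a \<in> Sqf")
      case True
      have "a dvd a" by simp
      thus ?thesis using True na by blast
    next
      case False
      hence "\<exists>b c. a = b^2 * c \<and> \<not> unitH b" unfolding Sqf_def by simp
      then obtain b c where a: "a = b^2 * c" and nb: "\<not> unitH b" by blast
      have a2: "a = b * (b * c)" using a by (simp add: power2_eq_square ac_simps)
      have "\<not> unitH (b * c)" using nb unitH_multD by blast
      hence "\<not> a dvd b" using proper_div[OF canc a2] by blast
      moreover have "b dvd a" using a2 by simp
      ultimately have "\<exists>d\<in>Sqf. d dvd b \<and> \<not> unitH d" using IH[of b] nb by simp
      then obtain d where "d \<in> Sqf" "d dvd b" "\<not> unitH d" by blast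
      moreover have "d dvd a" using \<open>d dvd b\<close> \<open>b dvd a\<close> by (rule dvd_trans)
      ultimately show ?thesis by blast
    qed
  qed
qed

lemma cond5'_cond2_Sqf:
  assumes canc: "cancellative TYPE('a::comm_monoid_mult)" and acc: "ACCP TYPE('a)"
    and h: "\<forall>a::'a. cond5' Sqf a"
  shows "cond2 Sqf (a::'a)"
proof (rule chain_gen[OF canc acc])
  fix a :: 'a
  obtain b c where cS: "c \<in> Sqf" and a: "a = b * c" and H: "\<forall>d\<in>Sqf. d dvd a \<longrightarrow> d dvd c"
    using spec[OF h, of a] unfolding cond5'_def by blast
  have "unitH c \<longrightarrow> a \<in> Sqf"
  proof
    assume uc: "unitH c"
    have "unitH a"
    proof (rule ccontr)
      assume "\<not> unitH a"
      hence "\<exists>d\<in>Sqf. d dvd a \<and> \<not> unitH d" using sqf_div[OF canc acc, of a] by blast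
      then obtain d where "d \<in> Sqf" "d dvd a" "\<not> unitH d" by blast
      hence "d dvd c" using H by blast
      hence "unitH d" by (rule dvd_unitH[OF uc])
      thus False using \<open>\<not> unitH d\<close> by blast
    qed
    thus "a \<in> Sqf" by (rule unit_Sqf)
  qed
  moreover have "\<forall>d\<in>Sqf. d dvd b \<longrightarrow> d dvd c"
  proof (intro ballI impI)
    fix d assume "d \<in> Sqf" "d dvd b"
    moreover have "b dvd a" using a by simp
    ultimately show "d dvd c" using H dvd_trans by blast
  qed
  ultimately show "\<exists>b c. c \<in> Sqf \<and> a = b * c \<and> (unitH c \<longrightarrow> a \<in> Sqf) \<and> (\<forall>d\<in>Sqf. d dvd b \<longrightarrow> d dvd c)"
    using cS a by blast
qed

lemma cond5_cond5': "cond5 Gpr (a::'a::comm_monoid_mult) \<Longrightarrow> cond5' Gpr a"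
proof -
  assume "cond5 Gpr a"
  then obtain b c k where cG: "c \<in> Gpr" and a: "a = b * c" and k: "k \<ge> 1" and ak: "a dvd c ^ k"
    unfolding cond5_def by blast
  have "\<forall>d\<in>Gpr. d dvd a \<longrightarrow> d dvd c"
  proof (intro ballI impI)
    fix d assume "d \<in> Gpr" "d dvd a"
    moreover have "d dvd c ^ k" using \<open>d dvd a\<close> ak by (rule dvd_trans)
    ultimately show "d dvd c" using GprD k by blast
  qed
  thus ?thesis unfolding cond5'_def using cG a by blast
qed

lemma cond4_cond4': "cond4 Gpr (a::'a::comm_monoid_mult) \<Longrightarrow> cond4' Gpr a"
proof -
  assume "cond4 Gpr a"
  then obtain b c d0 n where cG: "c \<in> Gpr" and rp: "relprime b c" and a: "a = b * c"
    and d0: "d0 \<in> Gpr" and d2: "d0^2 dvd b" and n: "n \<ge> 1" and bd: "b dvd d0 ^ n"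
    unfolding cond4_def by blast
  have "\<forall>d\<in>Gpr. d dvd b \<longrightarrow> d^2 dvd b"
  proof (intro ballI impI)
    fix d assume "d \<in> Gpr" "d dvd b"
    hence "d dvd d0" using GprD[of d n d0] bd n dvd_trans by blast
    hence "d^2 dvd d0^2" by (simp add: power2_eq_square mult_dvd_mono)
    thus "d^2 dvd b" using d2 dvd_trans by blast
  qed
  thus ?thesis unfolding cond4'_def using cG rp a by blast
qed

lemma mono1: "S \<subseteq> T \<Longrightarrow> cond1 S (a::'a::comm_monoid_mult) \<Longrightarrow> cond1 T a"
  unfolding cond1_def by blast
lemma mono2: "S \<subseteq> T \<Longrightarrow> cond2 S (a::'a::comm_monoid_mult) \<Longrightarrow> cond2 T a"
  unfolding cond2_def by blast
lemma mono4: "S \<subseteq> T \<Longrightarrow> cond4 S (a::'a::comm_monoid_mult) \<Longrightarrow> cond4 T a"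
  unfolding cond4_def by blast
lemma mono5: "S \<subseteq> T \<Longrightarrow> cond5 S (a::'a::comm_monoid_mult) \<Longrightarrow> cond5 T a"
  unfolding cond5_def by blast

definition mclos :: "'a::comm_monoid_mult set \<Rightarrow> 'a \<Rightarrow> bool" where
  "mclos S x \<longleftrightarrow> (\<exists>xs. xs \<noteq> [] \<and> set xs \<subseteq> S \<and> x = prod_list xs)"

lemma list_prod_seq:
  fixes xs :: "'a::comm_monoid_mult list"
  shows "set xs \<subseteq> S \<Longrightarrow> \<exists>s. (\<forall>i\<in>{1..length xs}. s i \<in> S) \<and> prod_list xs = (\<Prod>i=1..length xs. s i)"
proof (induction xs rule: rev_induct)
  case Nil thus ?case by simp
next
  case (snoc x xs)
  then obtain s where sS: "\<forall>i\<in>{1..length xs}. s i \<in> S" and e: "prod_list xs = (\<Prod>i=1..length xs. s i)"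
    by auto
  define s' where "s' = s(Suc (length xs) := x)"
  have "(\<Prod>i=1..length xs. s' i) = (\<Prod>i=1..length xs. s i)"
    by (rule prod.cong) (auto simp: s'_def)
  hence "prod_list (xs @ [x]) = (\<Prod>i=1..length (xs @ [x]). s' i)"
    using e by (simp add: s'_def)
  moreover have "\<forall>i\<in>{1..length (xs @ [x])}. s' i \<in> S" using sS snoc.prems by (auto simp: s'_def)
  ultimately show ?case by blast
qed

lemma mclos_cond0: "mclos S x \<Longrightarrow> cond0 S x"
proof -
  assume "mclos S x"
  then obtain xs where "xs \<noteq> []" "set xs \<subseteq> S" "x = prod_list xs" unfolding mclos_def by blast
  moreover obtain s where "\<forall>i\<in>{1..length xs}. s i \<in> S" "prod_list xs = (\<Prod>i=1..length xs. s i)"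
    using list_prod_seq \<open>set xs \<subseteq> S\<close> by blast
  moreover have "length xs \<ge> 1" using \<open>xs \<noteq> []\<close> by (cases xs) auto
  ultimately show ?thesis unfolding cond0_def by blast
qed

lemma mclos_mult: "mclos S x \<Longrightarrow> mclos S y \<Longrightarrow> mclos S (x * y)"
proof -
  assume "mclos S x" "mclos S y"
  then obtain xs ys where "xs \<noteq> []" "set xs \<subseteq> S" "x = prod_list xs"
    "ys \<noteq> []" "set ys \<subseteq> S" "y = prod_list ys" unfolding mclos_def by blast
  hence "xs @ ys \<noteq> [] \<and> set (xs @ ys) \<subseteq> S \<and> x * y = prod_list (xs @ ys)" by simp
  thus ?thesis unfolding mclos_def by blast
qed

lemma mclos_S: "x \<in> S \<Longrightarrow> mclos S x"
  unfolding mclos_def by (intro exI[of _ "[x]"]) simp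

lemma mclos_pow: "1 \<in> S \<Longrightarrow> mclos S x \<Longrightarrow> mclos S (x ^ k)"
  by (induct k) (auto intro: mclos_S mclos_mult)

lemma mclos_prod: "1 \<in> S \<Longrightarrow> (\<forall>i\<in>A. mclos S (f i)) \<Longrightarrow> mclos S (prod f A)"
  by (induct A rule: infinite_finite_induct) (auto intro: mclos_S mclos_mult)

lemma cond1_cond0: "1 \<in> S \<Longrightarrow> cond1 S (a::'a::comm_monoid_mult) \<Longrightarrow> cond0 S a"
proof -
  assume one: "1 \<in> S" and "cond1 S a"
  then obtain n s where sS: "\<forall>i\<in>{1..n}. s i \<in> S" and a: "a = (\<Prod>i=1..n. s i ^ i)"
    unfolding cond1_def by blast
  have "\<forall>i\<in>{1..n}. mclos S (s i ^ i)" using sS mclos_pow[OF one] mclos_S by blast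
  hence "mclos S a" unfolding a by (rule mclos_prod[OF one])
  thus ?thesis by (rule mclos_cond0)
qed


theorem proposition4p6:
  assumes "cancellative TYPE('a::comm_monoid_mult)"
    and "ACCP TYPE('a)"
  defines "R \<equiv> (Gpr :: 'a set)" and "Q \<equiv> (Sqf :: 'a set)"
  shows "((\<forall>a. cond1 R a) \<longrightarrow> (\<forall>a. cond0 R a))
    \<and> ((\<forall>a. cond2 R a) \<longrightarrow> (\<forall>a. cond1 R a))
    \<and> ((\<forall>a. cond2 R a) \<longleftrightarrow> (\<forall>a. cond3 R a))
    \<and> ((\<forall>a. cond3 R a) \<longleftrightarrow> (\<forall>a. cond6 R a))
    \<and> ((\<forall>a. cond6 R a) \<longleftrightarrow> (\<forall>a. cond5 R a))
    \<and> ((\<forall>a. cond5 R a) \<longrightarrow> (\<forall>a. cond4 R a))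
    \<and> ((\<forall>a. cond5 R a) \<longrightarrow> (\<forall>a. cond5' R a))
    \<and> ((\<forall>a. cond4 R a) \<longrightarrow> (\<forall>a. cond4' R a))
    \<and> ((\<forall>a. cond1 R a) \<longrightarrow> (\<forall>a. cond1 Q a))
    \<and> ((\<forall>a. cond2 R a) \<longrightarrow> (\<forall>a. cond2 Q a))
    \<and> ((\<forall>a. cond5 R a) \<longrightarrow> (\<forall>a. cond5 Q a))
    \<and> ((\<forall>a. cond4 R a) \<longrightarrow> (\<forall>a. cond4 Q a))
    \<and> ((\<forall>a. cond2 Q a) \<longrightarrow> (\<forall>a. cond5 Q a))
    \<and> ((\<forall>a. cond5' Q a) \<longrightarrow> (\<forall>a. cond2 Q a))"
proof -
  note canc = assms(1) and acc = assms(2)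
  have sub: "(Gpr::'a set) \<subseteq> Sqf" by (rule Gpr_Sqf[OF canc])
  have i26: "(\<forall>a::'a. cond2 Gpr a) \<Longrightarrow> (\<forall>a::'a. cond6 Gpr a)" using cond2_cond6[OF canc] by blast
  have i36: "(\<forall>a::'a. cond3 Gpr a) \<Longrightarrow> (\<forall>a::'a. cond6 Gpr a)" using cond3_cond6 by blast
  have i63: "(\<forall>a::'a. cond6 Gpr a) \<Longrightarrow> (\<forall>a::'a. cond3 Gpr a)" using cond6_cond3[OF canc acc] by blast
  have i65: "(\<forall>a::'a. cond6 Gpr a) \<Longrightarrow> (\<forall>a::'a. cond5 Gpr a)" using cond6_cond5[OF canc acc] by blast
  have i52: "(\<forall>a::'a. cond5 Gpr a) \<Longrightarrow> (\<forall>a::'a. cond2 Gpr a)" using cond5_cond2[OF canc acc] by blast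
  have i51: "(\<forall>a::'a. cond5 Gpr a) \<Longrightarrow> (\<forall>a::'a. cond1 Gpr a)"
    using cond5_cond1p[OF canc acc] cond1p_cond1[OF canc] by blast
  have i54: "(\<forall>a::'a. cond5 Gpr a) \<Longrightarrow> (\<forall>a::'a. cond4 Gpr a)"
    using cond5_cond1p[OF canc acc] cond1p_cond4[OF canc] by blast
  have i10: "(\<forall>a::'a. cond1 Gpr a) \<Longrightarrow> (\<forall>a::'a. cond0 Gpr a)"
    using cond1_cond0[OF one_Gpr] by blast
  have i55: "(\<forall>a::'a. cond5 Gpr a) \<Longrightarrow> (\<forall>a::'a. cond5' Gpr a)" using cond5_cond5' by blast
  have i44: "(\<forall>a::'a. cond4 Gpr a) \<Longrightarrow> (\<forall>a::'a. cond4' Gpr a)" using cond4_cond4' by blast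
  have s1: "(\<forall>a::'a. cond1 Gpr a) \<Longrightarrow> (\<forall>a::'a. cond1 Sqf a)" using mono1[OF sub] by blast
  have s2: "(\<forall>a::'a. cond2 Gpr a) \<Longrightarrow> (\<forall>a::'a. cond2 Sqf a)" using mono2[OF sub] by blast
  have s5: "(\<forall>a::'a. cond5 Gpr a) \<Longrightarrow> (\<forall>a::'a. cond5 Sqf a)" using mono5[OF sub] by blast
  have s4: "(\<forall>a::'a. cond4 Gpr a) \<Longrightarrow> (\<forall>a::'a. cond4 Sqf a)" using mono4[OF sub] by blast
  have q25: "(\<forall>a::'a. cond2 Sqf a) \<Longrightarrow> (\<forall>a::'a. cond5 Sqf a)" using cond2_cond5 by blast
  have q52: "(\<forall>a::'a. cond5' Sqf a) \<Longrightarrow> (\<forall>a::'a. cond2 Sqf a)" using cond5'_cond2_Sqf[OF canc acc] by blast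
  show ?thesis unfolding R_def Q_def
    apply (intro conjI iffI impI)
    apply (erule i10)
    apply (erule i51[OF i65[OF i26]])
    apply (erule i63[OF i26])
    apply (erule i52[OF i65[OF i36]])
    apply (erule i36)
    apply (erule i63)
    apply (erule i65)
    apply (erule i26[OF i52])
    apply (erule i54)
    apply (erule i55)
    apply (erule i44)
    apply (erule s1)
    apply (erule s2)
    apply (erule s5)
    apply (erule s4)
    apply (erule q25)
    apply (erule q52)
    done
qed

end
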